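(* Let $m$ be a positive integer. If $\|m\alpha\|\ge\|q_{k-1}\alpha\|+\|q_k\alpha\|$ for some $k\ge1$, then $\mathrm{ab}_\alpha(m)<q_k$.
   Context: $\alpha\in(0,1)$ irrational, $\alpha=[0;a_1,a_2,\ldots]$ with positive integers $a_i$, $a_1\ge2$; $q_{-1}=0$, $q_0=1$, $q_1=a_1$, $q_k=a_kq_{k-1}+q_{k-2}$ ($k\ge2$). $\|x\|$ is the distance from $x$ to the nearest integer. Sturmian words of slope $\alpha$: with $R(\rho)=\{\rho+\alpha\}$ on $[0,1)$ and either $I_0=[0,1-\alpha)$ or $I_0=(0,1-\alpha]$ ($I_1$ its complement), $\mathbf{s}_{\rho,\alpha}$ has $n$-th letter $0$ iff $R^n(\rho)\in I_0$; they share a set $\mathcal{L}_\alpha$ of finite factors. An abelian power of period $m$ and exponent $e$ is a concatenation of $e$ pairwise abelian equivalent words (same numbers of $0$s and $1$s) of length $m$; $\mathrm{ab}_\alpha(m)$ is the maximum exponent of an abelian power of period $m$ in $\mathcal{L}_\alpha$ (it is known that $\mathrm{ab}_\alpha(m)=\lfloor 1/\|m\alpha\|\rfloor$). *)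

theory Defs
  imports Complex_Main "HOL-Library.Multiset"
begin

text \<open>The partial quotients are a_k = floor(1/x_(k-1)) for k >= 1, so that
  alpha = [0; a_1, a_2, ...] for irrational alpha in (0,1).\<close>

fun cf_rem :: "real \<Rightarrow> nat \<Rightarrow> real" where
  "cf_rem \<alpha> 0 = \<alpha>"
| "cf_rem \<alpha> (Suc k) = frac (1 / cf_rem \<alpha> k)"

definition cf_a :: "real \<Rightarrow> nat \<Rightarrow> nat" where
  "cf_a \<alpha> k = nat \<lfloor>1 / cf_rem \<alpha> (k - 1)\<rfloor>"

text \<open>Denominators of convergents: q_0 = 1, q_1 = a_1, q_k = a_k q_(k-1) + q_(k-2).
  (q_(-1) = 0 is only used to get q_1 = a_1.)\<close>

fun cf_q :: "real \<Rightarrow> nat \<Rightarrow> nat" where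
  "cf_q \<alpha> 0 = 1"
| "cf_q \<alpha> (Suc 0) = cf_a \<alpha> 1"
| "cf_q \<alpha> (Suc (Suc k)) = cf_a \<alpha> (Suc (Suc k)) * cf_q \<alpha> (Suc k) + cf_q \<alpha> k"

definition dist_int :: "real \<Rightarrow> real" where
  "dist_int x = \<bar>x - of_int (round x)\<bar>"

definition sturm_I0 :: "bool \<Rightarrow> real \<Rightarrow> real set" where
  "sturm_I0 b \<alpha> = (if b then {0..<1 - \<alpha>} else {0<..1 - \<alpha>})"

definition sturm_letter :: "bool \<Rightarrow> real \<Rightarrow> real \<Rightarrow> nat \<Rightarrow> nat" where
  "sturm_letter b \<rho> \<alpha> n = (if frac (\<rho> + real n * \<alpha>) \<in> sturm_I0 b \<alpha> then 0 else 1)"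

definition sturm_factors :: "real \<Rightarrow> nat list set" where
  "sturm_factors \<alpha> = {w. \<exists>b \<rho> i. 0 \<le> \<rho> \<and> \<rho> < 1 \<and>
       w = map (sturm_letter b \<rho> \<alpha>) [i..<i + length w]}"

definition abelian_equiv :: "nat list \<Rightarrow> nat list \<Rightarrow> bool" where
  "abelian_equiv u v \<longleftrightarrow> mset u = mset v"

definition abelian_power :: "nat list \<Rightarrow> nat \<Rightarrow> nat \<Rightarrow> bool" where
  "abelian_power w m e \<longleftrightarrow> (\<exists>ws. length ws = e \<and> w = concat ws \<and>
       (\<forall>u\<in>set ws. length u = m) \<and> (\<forall>u\<in>set ws. \<forall>v\<in>set ws. abelian_equiv u v))"

definition ab :: "real \<Rightarrow> nat \<Rightarrow> nat" where
  "ab \<alpha> m = Sup {e. \<exists>w\<in>sturm_factors \<alpha>. abelian_power w m e}"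

end

theory Submission
  imports Defs
begin

lemma rem_irr: "\<alpha> \<notin> \<rat> \<Longrightarrow> cf_rem \<alpha> k \<notin> \<rat>"
proof (induction k)
  case 0 then show ?case by simp
next
  case (Suc k)
  show ?case
  proof
    assume "cf_rem \<alpha> (Suc k) \<in> \<rat>"
    then have "1 / cf_rem \<alpha> k - of_int \<lfloor>1 / cf_rem \<alpha> k\<rfloor> \<in> \<rat>" by (simp add: frac_def)
    then have "1 / cf_rem \<alpha> k \<in> \<rat>"
      by (metis Rats_add Rats_of_int diff_add_cancel)
    then have "cf_rem \<alpha> k \<in> \<rat>" by (metis Rats_inverse inverse_eq_divide inverse_inverse_eq)
    with Suc show False by simp
  qed
qed

lemma rem_bounds:
  assumes "0 < \<alpha>" "\<alpha> < 1" "\<alpha> \<notin> \<rat>"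
  shows "0 < cf_rem \<alpha> k \<and> cf_rem \<alpha> k < 1"
proof (cases k)
  case 0 then show ?thesis using assms by simp
next
  case (Suc j)
  have "cf_rem \<alpha> k \<noteq> 0" using rem_irr[OF assms(3), of k] by auto
  moreover have "cf_rem \<alpha> k \<ge> 0" "cf_rem \<alpha> k < 1" using Suc by (auto simp: frac_lt_1)
  ultimately show ?thesis by simp
qed

lemma a_eq:
  assumes "0 < \<alpha>" "\<alpha> < 1" "\<alpha> \<notin> \<rat>" "k \<ge> 1"
  shows "1 / cf_rem \<alpha> (k - 1) = real (cf_a \<alpha> k) + cf_rem \<alpha> k \<and> cf_a \<alpha> k \<ge> 1"
proof -
  obtain j where k: "k = Suc j" using assms(4) by (cases k) auto
  have b: "0 < cf_rem \<alpha> j" "cf_rem \<alpha> j < 1" using rem_bounds[OF assms(1-3)] by auto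
  then have "1 / cf_rem \<alpha> j > 1" by simp
  then have fl: "\<lfloor>1 / cf_rem \<alpha> j\<rfloor> \<ge> 1" by (simp add: one_le_floor)
  have "real (cf_a \<alpha> k) = of_int \<lfloor>1 / cf_rem \<alpha> j\<rfloor>" 
  proof -
    have "0 \<le> \<lfloor>1 / cf_rem \<alpha> j\<rfloor>" using fl by linarith
    then show ?thesis by (simp only: cf_a_def k diff_Suc_1)
  qed
  moreover have "cf_rem \<alpha> k = 1 / cf_rem \<alpha> j - of_int \<lfloor>1 / cf_rem \<alpha> j\<rfloor>" by (simp add: k frac_def)
  moreover have "cf_a \<alpha> k \<ge> 1" using fl by (simp only: cf_a_def k diff_Suc_1)
  ultimately show ?thesis by (simp add: k)
qed

fun Pr :: "real \<Rightarrow> nat \<Rightarrow> real" where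
  "Pr \<alpha> 0 = \<alpha>"
| "Pr \<alpha> (Suc k) = Pr \<alpha> k * cf_rem \<alpha> (Suc k)"

fun cp :: "real \<Rightarrow> nat \<Rightarrow> int" where
  "cp \<alpha> 0 = 0"
| "cp \<alpha> (Suc 0) = 1"
| "cp \<alpha> (Suc (Suc k)) = int (cf_a \<alpha> (Suc (Suc k))) * cp \<alpha> (Suc k) + cp \<alpha> k"

context
  fixes \<alpha> :: real
  assumes A: "0 < \<alpha>" "\<alpha> < 1" "\<alpha> \<notin> \<rat>"
begin

lemma Pr_bounds: "0 < Pr \<alpha> k \<and> Pr \<alpha> k \<le> \<alpha>"
proof (induction k)
  case 0 then show ?case using A by simp
next
  case (Suc k)
  have x: "0 < cf_rem \<alpha> (Suc k)" "cf_rem \<alpha> (Suc k) < 1" using rem_bounds[OF A, of "Suc k"] by blast+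
  have "Pr \<alpha> k * cf_rem \<alpha> (Suc k) \<le> Pr \<alpha> k" using x Suc by (intro mult_left_le) auto
  moreover have "0 < Pr \<alpha> k * cf_rem \<alpha> (Suc k)" using x Suc by (intro mult_pos_pos) auto
  ultimately have "0 < Pr \<alpha> (Suc k)" "Pr \<alpha> (Suc k) \<le> \<alpha>" using Suc by (simp_all only: Pr.simps) linarith
  then show ?case by blast
qed

lemma a_eq': "1 = cf_rem \<alpha> k * (real (cf_a \<alpha> (Suc k)) + cf_rem \<alpha> (Suc k))"
proof -
  have "1 / cf_rem \<alpha> k = real (cf_a \<alpha> (Suc k)) + cf_rem \<alpha> (Suc k)"
    using a_eq[OF A, of "Suc k"] by simp
  moreover have "cf_rem \<alpha> k > 0" using rem_bounds[OF A] by auto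
  ultimately show ?thesis by (simp add: field_simps)
qed

lemma ident: "real (cf_q \<alpha> (Suc k)) * Pr \<alpha> k + real (cf_q \<alpha> k) * Pr \<alpha> (Suc k) = 1"
proof (induction k)
  case 0
  show ?case using a_eq'[of 0] by (simp add: algebra_simps)
next
  case (Suc k)
  have e: "1 = cf_rem \<alpha> (Suc k) * (real (cf_a \<alpha> (Suc (Suc k))) + cf_rem \<alpha> (Suc (Suc k)))"
    by (rule a_eq')
  have "real (cf_q \<alpha> (Suc (Suc k))) * Pr \<alpha> (Suc k) + real (cf_q \<alpha> (Suc k)) * Pr \<alpha> (Suc (Suc k))
     = real (cf_q \<alpha> (Suc k)) * Pr \<alpha> k * (cf_rem \<alpha> (Suc k) * (real (cf_a \<alpha> (Suc (Suc k))) + cf_rem \<alpha> (Suc (Suc k))))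
       + real (cf_q \<alpha> k) * Pr \<alpha> (Suc k)"
    by (simp add: algebra_simps)
  also have "\<dots> = 1" using Suc e by simp
  finally show ?case .
qed

lemma pq: "real (cf_q \<alpha> k) * \<alpha> - of_int (cp \<alpha> k) = (-1)^k * Pr \<alpha> k
   \<and> real (cf_q \<alpha> (Suc k)) * \<alpha> - of_int (cp \<alpha> (Suc k)) = (-1)^(Suc k) * Pr \<alpha> (Suc k)"
proof (induction k)
  case 0
  have "1 = \<alpha> * (real (cf_a \<alpha> 1) + cf_rem \<alpha> 1)" using a_eq'[of 0] by simp
  then show ?case by (simp add: algebra_simps)
next
  case (Suc k)
  have e: "1 = cf_rem \<alpha> (Suc k) * (real (cf_a \<alpha> (Suc (Suc k))) + cf_rem \<alpha> (Suc (Suc k)))"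
    by (rule a_eq')
  have "real (cf_q \<alpha> (Suc (Suc k))) * \<alpha> - of_int (cp \<alpha> (Suc (Suc k)))
    = real (cf_a \<alpha> (Suc (Suc k))) * (real (cf_q \<alpha> (Suc k)) * \<alpha> - of_int (cp \<alpha> (Suc k)))
      + (real (cf_q \<alpha> k) * \<alpha> - of_int (cp \<alpha> k))"
    by (simp add: algebra_simps)
  also have "\<dots> = real (cf_a \<alpha> (Suc (Suc k))) * ((-1)^(Suc k) * Pr \<alpha> (Suc k)) + (-1)^k * Pr \<alpha> k"
    using Suc by simp
  also have "\<dots> = (-1)^k * Pr \<alpha> k * (1 - real (cf_a \<alpha> (Suc (Suc k))) * cf_rem \<alpha> (Suc k))"
    by (simp add: algebra_simps)
  also have "1 - real (cf_a \<alpha> (Suc (Suc k))) * cf_rem \<alpha> (Suc k) = cf_rem \<alpha> (Suc k) * cf_rem \<alpha> (Suc (Suc k))"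
    using e by (simp add: algebra_simps)
  also have "(-1)^k * Pr \<alpha> k * (cf_rem \<alpha> (Suc k) * cf_rem \<alpha> (Suc (Suc k))) = (-1)^(Suc (Suc k)) * Pr \<alpha> (Suc (Suc k))"
    by simp
  finally show ?case using Suc by simp
qed

lemma dist_q:
  assumes "cf_a \<alpha> 1 \<ge> 2"
  shows "dist_int (real (cf_q \<alpha> k) * \<alpha>) = Pr \<alpha> k"
proof -
  have "1 / \<alpha> \<ge> 2"
  proof -
    have "2 \<le> real (cf_a \<alpha> 1)" using assms by simp
    also have "\<dots> \<le> 1 / \<alpha>"
    proof -
      have e1: "1/\<alpha> = real (cf_a \<alpha> 1) + cf_rem \<alpha> 1" using a_eq[OF A, of 1] by simp
      have "cf_rem \<alpha> 1 > 0" using rem_bounds[OF A, of 1] by blast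
      then show ?thesis using e1 by linarith
    qed
    finally show ?thesis .
  qed
  then have "\<alpha> \<le> 1/2" using A by (simp add: field_simps)
  moreover have "\<alpha> \<noteq> 1/2"
  proof
    assume "\<alpha> = 1/2"
    moreover have "(1/2::real) \<in> \<rat>" by (simp add: Rats_divide)
    ultimately show False using A(3) by metis
  qed
  ultimately have h: "Pr \<alpha> k < 1/2" "0 < Pr \<alpha> k" using Pr_bounds[of k] by auto
  have "\<bar>real (cf_q \<alpha> k) * \<alpha> - of_int (cp \<alpha> k)\<bar> = Pr \<alpha> k"
    using pq[of k] h by (simp add: abs_mult)
  then have "round (real (cf_q \<alpha> k) * \<alpha>) = cp \<alpha> k" using h by (intro round_unique') simp
  then show ?thesis unfolding dist_int_def using pq[of k] h by (simp add: abs_mult)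
qed

lemma q_mono: "cf_q \<alpha> k \<le> cf_q \<alpha> (Suc k)"
proof (cases k)
  case 0 then show ?thesis using a_eq[OF A, of 1] by simp
next
  case (Suc j)
  have "cf_a \<alpha> (Suc (Suc j)) \<ge> 1" using a_eq[OF A, of "Suc (Suc j)"] by simp
  then have "cf_q \<alpha> (Suc j) \<le> cf_a \<alpha> (Suc (Suc j)) * cf_q \<alpha> (Suc j)" by simp
  then show ?thesis using Suc by (simp only: cf_q.simps)
qed

lemma q_pos: "cf_q \<alpha> k \<ge> 1"
proof (induction k)
  case (Suc k) then show ?case using q_mono[of k] by linarith
qed simp

end
definition Fl :: "bool \<Rightarrow> real \<Rightarrow> int" where
  "Fl b t = (if b then \<lfloor>t\<rfloor> else \<lceil>t\<rceil>)"

lemma Fl_shift: "Fl b (t + of_int n) = Fl b t + n"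
  by (simp add: Fl_def floor_add_int[symmetric])

lemma Fl_diff: "\<bar>of_int (Fl b s - Fl b t)\<bar> < \<bar>s - t\<bar> + (1::real)"
proof (cases b)
  case True
  have "of_int \<lfloor>s\<rfloor> \<le> s" "s < of_int \<lfloor>s\<rfloor> + 1" "of_int \<lfloor>t\<rfloor> \<le> t" "t < of_int \<lfloor>t\<rfloor> + 1" by linarith+
  then show ?thesis using True unfolding Fl_def by (simp add: abs_less_iff) linarith
next
  case False
  have "of_int \<lceil>s\<rceil> - 1 < s" "s \<le> of_int \<lceil>s\<rceil>" "of_int \<lceil>t\<rceil> - 1 < t" "t \<le> of_int \<lceil>t\<rceil>" by linarith+
  then show ?thesis using False unfolding Fl_def by (simp add: abs_less_iff) linarith
qed

lemma Fl_eq: "Fl b s = Fl b t \<Longrightarrow> \<bar>s - t\<bar> < 1"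
proof (cases b)
  case True
  have "of_int \<lfloor>s\<rfloor> \<le> s" "s < of_int \<lfloor>s\<rfloor> + 1" "of_int \<lfloor>t\<rfloor> \<le> t" "t < of_int \<lfloor>t\<rfloor> + 1" by linarith+
  moreover assume "Fl b s = Fl b t"
  ultimately show ?thesis using True unfolding Fl_def by (simp add: abs_less_iff) linarith
next
  case False
  have "of_int \<lceil>s\<rceil> - 1 < s" "s \<le> of_int \<lceil>s\<rceil>" "of_int \<lceil>t\<rceil> - 1 < t" "t \<le> of_int \<lceil>t\<rceil>" by linarith+
  moreover assume "Fl b s = Fl b t"
  ultimately show ?thesis using False unfolding Fl_def by (simp add: abs_less_iff) linarith
qed

lemma letter_eq:
  assumes "0 < \<alpha>" "\<alpha> < 1"
  shows "int (sturm_letter b \<rho> \<alpha> j) = Fl b (\<rho> + real j * \<alpha> + \<alpha>) - Fl b (\<rho> + real j * \<alpha>)"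
proof -
  define t where "t = \<rho> + real j * \<alpha>"
  have t: "t = of_int \<lfloor>t\<rfloor> + frac t" by (simp add: frac_def)
  have f: "0 \<le> frac t" "frac t < 1" by (auto simp: frac_lt_1)
  have fl: "\<lfloor>t + \<alpha>\<rfloor> = \<lfloor>t\<rfloor> + \<lfloor>frac t + \<alpha>\<rfloor>"
    by (subst t) (metis add.commute floor_add_int group_cancel.add1)
  have ce: "\<lceil>t + \<alpha>\<rceil> = \<lfloor>t\<rfloor> + \<lceil>frac t + \<alpha>\<rceil>"
    by (subst t) (metis add.commute ceiling_add_of_int group_cancel.add1)
  have ce0: "\<lceil>t\<rceil> = \<lfloor>t\<rfloor> + \<lceil>frac t\<rceil>"
    by (subst (1) t) (metis add.commute ceiling_add_of_int)
  show ?thesis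
  proof (cases b)
    case True
    show ?thesis
    proof -
      have c2: "\<lfloor>frac t + \<alpha>\<rfloor> = (if frac t + \<alpha> < 1 then 0 else 1)" using f assms by (auto simp: floor_eq_iff)
      show ?thesis using True unfolding sturm_letter_def sturm_I0_def Fl_def t_def[symmetric]
        using f assms fl c2 by auto
    qed
  next
    case False
    have z: "t \<in> \<int> \<Longrightarrow> frac t = 0" by (simp add: frac_eq_0_iff)
    have c1: "\<lceil>frac t\<rceil> = (if frac t = 0 then 0 else 1)" 
    proof (cases "frac t = 0")
      case True then show ?thesis by (simp only: True) simp
    next
      case False then show ?thesis using f by (simp add: ceiling_eq_iff)
    qed
    have p: "0 < frac t + \<alpha>" "frac t + \<alpha> < 2" using f assms by linarith+
    have c2: "\<lceil>frac t + \<alpha>\<rceil> = (if frac t + \<alpha> \<le> 1 then 1 else 2)" using p by (auto simp: ceiling_eq_iff)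
    show ?thesis using False unfolding sturm_letter_def sturm_I0_def Fl_def t_def[symmetric]
      using f assms ce ce0 c1 c2 frac_eq_0_iff[of t] by (cases "frac t = 0") (simp_all del: frac_eq_0_iff)
  qed
qed

lemma tele:
  assumes "0 < \<alpha>" "\<alpha> < 1"
  shows "int (sum_list (map (sturm_letter b \<rho> \<alpha>) [n..<n+L])) =
     Fl b (\<rho> + real n * \<alpha> + real L * \<alpha>) - Fl b (\<rho> + real n * \<alpha>)"
proof (induction L)
  case 0 then show ?case by simp
next
  case (Suc L)
  have "int (sum_list (map (sturm_letter b \<rho> \<alpha>) [n..<n+Suc L])) =
    int (sum_list (map (sturm_letter b \<rho> \<alpha>) [n..<n+L])) + int (sturm_letter b \<rho> \<alpha> (n+L))" by simp
  also have "\<dots> = Fl b (\<rho> + real n * \<alpha> + real L * \<alpha>) - Fl b (\<rho> + real n * \<alpha>)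
     + (Fl b (\<rho> + real (n+L) * \<alpha> + \<alpha>) - Fl b (\<rho> + real (n+L) * \<alpha>))"
    using Suc letter_eq[OF assms] by simp
  also have "\<dots> = Fl b (\<rho> + real n * \<alpha> + real (Suc L) * \<alpha>) - Fl b (\<rho> + real n * \<alpha>)"
    by (simp add: algebra_simps)
  finally show ?case .
qed

lemma sum_concat: "sum_list (concat ws) = sum_list (map sum_list (ws :: nat list list))"
  by (induction ws) auto

lemma abel_bound:
  assumes "0 < \<alpha>" "\<alpha> < 1" "w \<in> sturm_factors \<alpha>" "abelian_power w m e" "e \<ge> 1"
  shows "real e * dist_int (real m * \<alpha>) < 1"
proof -
  obtain b \<rho> i where w: "w = map (sturm_letter b \<rho> \<alpha>) [i..<i + length w]"
    using assms(3) unfolding sturm_factors_def by blast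
  obtain ws where ws: "length ws = e" "w = concat ws" "\<forall>u\<in>set ws. length u = m"
    "\<forall>u\<in>set ws. \<forall>v\<in>set ws. mset u = mset v"
    using assms(4) unfolding abelian_power_def abelian_equiv_def by blast
  obtain u0 ws' where ws0: "ws = u0 # ws'" using ws(1) assms(5) by (cases ws) auto
  have lw: "length w = e * m" using ws
    by (simp add: length_concat sum_list_triv cong: map_cong)
  have "sum_list w = sum_list (map sum_list ws)" using ws(2) sum_concat by simp
  also have "map sum_list ws = map (\<lambda>_. sum_list u0) ws"
  proof (rule map_cong[OF refl])
    fix u assume "u \<in> set ws"
    then have "mset u = mset u0" using ws(4) ws0 by auto
    then show "sum_list u = sum_list u0" by (metis sum_mset_sum_list)
  qed
  finally have s1: "sum_list w = e * sum_list u0" using ws(1) by (simp add: sum_list_triv)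
  have "u0 = take m w" using ws0 ws by simp
  also have "\<dots> = map (sturm_letter b \<rho> \<alpha>) [i..<i + m]" using w lw assms(5)
    by (metis add_le_cancel_left le_add1 nat_mult_1 mult_le_mono1 take_map take_upt)
  finally have u0: "u0 = map (sturm_letter b \<rho> \<alpha>) [i..<i + m]" .
  define y where "y = \<rho> + real i * \<alpha>"
  define M where "M = real m * \<alpha>"
  define r where "r = round M"
  define d where "d = M - of_int r"
  have dd: "dist_int M = \<bar>d\<bar>" unfolding dist_int_def d_def r_def by simp
  have dle: "\<bar>d\<bar> \<le> 1/2" unfolding d_def r_def using of_int_round_abs_le[of M] by (simp add: abs_minus_commute)
  have c: "int (sum_list u0) = Fl b (y + M) - Fl b y"
    using tele[OF assms(1,2), of b \<rho> i m] u0 unfolding y_def M_def by simp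
  have W: "int (sum_list w) = Fl b (y + real e * M) - Fl b y"
    using tele[OF assms(1,2), of b \<rho> i "e*m"] w lw unfolding y_def M_def by (simp add: mult.assoc)
  define h where "h = int (sum_list u0) - r"
  have h1: "h = Fl b (y + d) - Fl b y"
    using c Fl_shift[of b "y + d" r] unfolding h_def d_def by simp
  have "real e * M = real e * d + of_int (int e * r)" unfolding d_def by (simp add: algebra_simps)
  then have "Fl b (y + real e * M) = Fl b (y + real e * d) + int e * r"
    using Fl_shift[of b "y + real e * d" "int e * r"] by (simp add: add.assoc)
  then have h2: "int e * h = Fl b (y + real e * d) - Fl b y"
    using W s1 unfolding h_def by (simp add: algebra_simps)
  have "\<bar>of_int h\<bar> < \<bar>d\<bar> + (1::real)" using Fl_diff[of b "y+d" y] h1 by simp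
  then have "\<bar>of_int h\<bar> < (2::real)" using dle by linarith
  then have "\<bar>h\<bar> \<le> 1" by linarith
  show ?thesis
  proof (cases "h = 0")
    case True
    then have "\<bar>(y + real e * d) - y\<bar> < 1" using h2 Fl_eq[of b "y + real e * d" y] by simp
    then show ?thesis using dd unfolding M_def by (simp add: abs_mult)
  next
    case False
    then have "\<bar>h\<bar> = 1" using \<open>\<bar>h\<bar> \<le> 1\<close> by linarith
    then have "\<bar>int e * h\<bar> = int e" by (simp add: abs_mult)
    then have "real e = \<bar>of_int (Fl b (y + real e * d) - Fl b y)\<bar>" using h2
      by (metis of_int_abs of_int_of_nat_eq)
    also have "\<dots> < \<bar>real e * d\<bar> + 1" using Fl_diff[of b "y + real e * d" y] by simp
    finally have "real e * (1 - \<bar>d\<bar>) < 1" by (simp add: abs_mult algebra_simps)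
    moreover have "real e * \<bar>d\<bar> \<le> real e * (1 - \<bar>d\<bar>)" using dle by (intro mult_left_mono) auto
    ultimately have "real e * \<bar>d\<bar> < 1" by linarith
    then show ?thesis using dd unfolding M_def by simp
  qed
qed

theorem lemma3p1:
  fixes \<alpha> :: real and m k :: nat
  assumes "0 < \<alpha>" "\<alpha> < 1" "\<alpha> \<notin> \<rat>"
    and "cf_a \<alpha> 1 \<ge> 2"
    and "m > 0" "k \<ge> 1"
    and "dist_int (real m * \<alpha>) \<ge>
           dist_int (real (cf_q \<alpha> (k - 1)) * \<alpha>) + dist_int (real (cf_q \<alpha> k) * \<alpha>)"
  shows "ab \<alpha> m < cf_q \<alpha> k"
proof -
  define E where "E = {e. \<exists>w\<in>sturm_factors \<alpha>. abelian_power w m e}"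
  define D where "D = dist_int (real m * \<alpha>)"
  obtain j where kj: "k = Suc j" using assms(6) by (cases k) auto
  have qpos: "cf_q \<alpha> k \<ge> 1" by (rule q_pos[OF assms(1-3)])
  have P: "D \<ge> Pr \<alpha> j + Pr \<alpha> k" using assms(7) dist_q[OF assms(1-4)] unfolding D_def kj by simp
  have Ppos: "0 < Pr \<alpha> j" "0 < Pr \<alpha> k" using Pr_bounds[OF assms(1-3)] by auto
  have id: "real (cf_q \<alpha> k) * Pr \<alpha> j + real (cf_q \<alpha> j) * Pr \<alpha> k = 1"
    using ident[OF assms(1-3), of j] unfolding kj .
  have mono: "real (cf_q \<alpha> j) \<le> real (cf_q \<alpha> k)" using q_mono[OF assms(1-3), of j] unfolding kj by simp
  have "real (cf_q \<alpha> j) * Pr \<alpha> k \<le> real (cf_q \<alpha> k) * Pr \<alpha> k"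
    using mono Ppos by (intro mult_right_mono) auto
  then have "1 \<le> real (cf_q \<alpha> k) * (Pr \<alpha> j + Pr \<alpha> k)" using id by (simp add: algebra_simps)
  also have "\<dots> \<le> real (cf_q \<alpha> k) * D" using P by (intro mult_left_mono) auto
  finally have qD: "1 \<le> real (cf_q \<alpha> k) * D" .
  have Dpos: "D > 0" using P Ppos by linarith
  have bound: "e < cf_q \<alpha> k" if eE: "e \<in> E" for e
  proof (cases "e = 0")
    case True then show ?thesis using qpos by simp
  next
    case False
    obtain w where "w \<in> sturm_factors \<alpha>" "abelian_power w m e" using eE unfolding E_def by blast
    then have "real e * D < 1" unfolding D_def using abel_bound[OF assms(1,2)] False by simp
    then have "real e * D < real (cf_q \<alpha> k) * D" using qD by linarith
    then have "real e < real (cf_q \<alpha> k)" using Dpos by simp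
    then show ?thesis by simp
  qed
  show ?thesis
  proof (cases "E = {}")
    case True then show ?thesis using qpos unfolding ab_def E_def[symmetric] by simp
  next
    case False
    have "Sup E \<le> cf_q \<alpha> k - 1" 
    proof (rule cSup_least[OF False])
      fix x assume "x \<in> E"
      then have "x < cf_q \<alpha> k" by (rule bound)
      then show "x \<le> cf_q \<alpha> k - 1" by linarith
    qed
    then show ?thesis using qpos unfolding ab_def E_def[symmetric] by linarith
  qed
qed

end
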